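(* Let $n\ge 2$ and let $F_1,\ldots,F_n$ be finite fields with $|F_1|\le\cdots\le|F_n|$. If $\mathrm{char}(F_1)=2$, then $$\chi\big(\mathrm{Reg}(\Gamma(F_1\times\cdots\times F_n))\big)=\omega\big(\mathrm{Reg}(\Gamma(F_1\times\cdots\times F_n))\big)=(|F_2|-1)\cdots(|F_n|-1).$$
   Context: For a commutative ring $R$ with identity, $Z(R)$ is the set of zero-divisors (including $0$) and $\mathrm{Reg}(R)=R\setminus Z(R)$. The total graph $T(\Gamma(R))$ is the simple graph with vertex set $R$ in which distinct $x,y$ are adjacent iff $x+y\in Z(R)$; $\mathrm{Reg}(\Gamma(R))$ is its induced subgraph on $\mathrm{Reg}(R)$. $\chi$ and $\omega$ denote chromatic and clique number. *)

theory Defs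
  imports "HOL-Algebra.Algebra"
begin

definition ring_char :: "('a, 'b) ring_scheme \<Rightarrow> nat" where
  "ring_char R = (if \<exists>n::nat. n > 0 \<and> add_pow R n \<one>\<^bsub>R\<^esub> = \<zero>\<^bsub>R\<^esub>
                  then (LEAST n::nat. n > 0 \<and> add_pow R n \<one>\<^bsub>R\<^esub> = \<zero>\<^bsub>R\<^esub>) else 0)"

definition prod_carrier :: "(nat \<Rightarrow> ('a, 'b) ring_scheme) \<Rightarrow> nat \<Rightarrow> (nat \<Rightarrow> 'a) set" where
  "prod_carrier F n = (\<Pi>\<^sub>E i\<in>{..<n}. carrier (F i))"

definition prod_zero :: "(nat \<Rightarrow> ('a, 'b) ring_scheme) \<Rightarrow> nat \<Rightarrow> (nat \<Rightarrow> 'a)" where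
  "prod_zero F n = (\<lambda>i\<in>{..<n}. \<zero>\<^bsub>F i\<^esub>)"

definition prod_add :: "(nat \<Rightarrow> ('a, 'b) ring_scheme) \<Rightarrow> nat \<Rightarrow> (nat \<Rightarrow> 'a) \<Rightarrow> (nat \<Rightarrow> 'a) \<Rightarrow> (nat \<Rightarrow> 'a)" where
  "prod_add F n x y = (\<lambda>i\<in>{..<n}. x i \<oplus>\<^bsub>F i\<^esub> y i)"

definition prod_mult :: "(nat \<Rightarrow> ('a, 'b) ring_scheme) \<Rightarrow> nat \<Rightarrow> (nat \<Rightarrow> 'a) \<Rightarrow> (nat \<Rightarrow> 'a) \<Rightarrow> (nat \<Rightarrow> 'a)" where
  "prod_mult F n x y = (\<lambda>i\<in>{..<n}. x i \<otimes>\<^bsub>F i\<^esub> y i)"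

definition prod_zero_divisors :: "(nat \<Rightarrow> ('a, 'b) ring_scheme) \<Rightarrow> nat \<Rightarrow> (nat \<Rightarrow> 'a) set" where
  "prod_zero_divisors F n = {x \<in> prod_carrier F n. \<exists>y \<in> prod_carrier F n.
      y \<noteq> prod_zero F n \<and> prod_mult F n x y = prod_zero F n}"

definition prod_regular :: "(nat \<Rightarrow> ('a, 'b) ring_scheme) \<Rightarrow> nat \<Rightarrow> (nat \<Rightarrow> 'a) set" where
  "prod_regular F n = prod_carrier F n - prod_zero_divisors F n"

text \<open>Adjacency of the total graph T(Gamma(R)): distinct x, y with x + y in Z(R).\<close>
definition total_adj :: "(nat \<Rightarrow> ('a, 'b) ring_scheme) \<Rightarrow> nat \<Rightarrow> (nat \<Rightarrow> 'a) \<Rightarrow> (nat \<Rightarrow> 'a) \<Rightarrow> bool" where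
  "total_adj F n x y \<longleftrightarrow> x \<noteq> y \<and> prod_add F n x y \<in> prod_zero_divisors F n"

definition is_clique :: "'v set \<Rightarrow> ('v \<Rightarrow> 'v \<Rightarrow> bool) \<Rightarrow> 'v set \<Rightarrow> bool" where
  "is_clique V E K \<longleftrightarrow> K \<subseteq> V \<and> (\<forall>x\<in>K. \<forall>y\<in>K. x \<noteq> y \<longrightarrow> E x y)"

definition clique_number :: "'v set \<Rightarrow> ('v \<Rightarrow> 'v \<Rightarrow> bool) \<Rightarrow> nat" where
  "clique_number V E = Max {card K | K. is_clique V E K}"

definition is_coloring :: "'v set \<Rightarrow> ('v \<Rightarrow> 'v \<Rightarrow> bool) \<Rightarrow> nat \<Rightarrow> ('v \<Rightarrow> nat) \<Rightarrow> bool" where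
  "is_coloring V E k c \<longleftrightarrow> (\<forall>x\<in>V. c x < k) \<and> (\<forall>x\<in>V. \<forall>y\<in>V. x \<noteq> y \<and> E x y \<longrightarrow> c x \<noteq> c y)"

definition chromatic_number :: "'v set \<Rightarrow> ('v \<Rightarrow> 'v \<Rightarrow> bool) \<Rightarrow> nat" where
  "chromatic_number V E = (LEAST k. \<exists>c. is_coloring V E k c)"

end

theory Submission imports Defs begin

lemma zd_char:
  assumes fld: "\<And>i. i < n \<Longrightarrow> field (F i)"
    and z: "z \<in> prod_carrier F n"
  shows "z \<in> prod_zero_divisors F n \<longleftrightarrow> (\<exists>i<n. z i = \<zero>\<^bsub>F i\<^esub>)"
proof
  assume "z \<in> prod_zero_divisors F n"
  then obtain y where y: "y \<in> prod_carrier F n" "y \<noteq> prod_zero F n" "prod_mult F n z y = prod_zero F n"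
    unfolding prod_zero_divisors_def by blast
  have "\<exists>i<n. y i \<noteq> \<zero>\<^bsub>F i\<^esub>"
  proof (rule ccontr)
    assume "\<not> ?thesis"
    then have "y = prod_zero F n" using y(1) unfolding prod_carrier_def prod_zero_def
      by (auto simp: PiE_def extensional_def fun_eq_iff)
    with y(2) show False by simp
  qed
  then obtain i where i: "i < n" "y i \<noteq> \<zero>\<^bsub>F i\<^esub>" by blast
  have "z i \<otimes>\<^bsub>F i\<^esub> y i = \<zero>\<^bsub>F i\<^esub>"
    using fun_cong[OF y(3), of i] i unfolding prod_mult_def prod_zero_def by simp
  moreover have "z i \<in> carrier (F i)" "y i \<in> carrier (F i)"
    using z y(1) i unfolding prod_carrier_def by auto
  ultimately have "z i = \<zero>\<^bsub>F i\<^esub>"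
    using i fld[of i] by (metis domain.integral_iff field.axioms(1))
  with i show "\<exists>i<n. z i = \<zero>\<^bsub>F i\<^esub>" by blast
next
  assume "\<exists>i<n. z i = \<zero>\<^bsub>F i\<^esub>"
  then obtain i where i: "i < n" "z i = \<zero>\<^bsub>F i\<^esub>" by blast
  define y where "y = (\<lambda>j\<in>{..<n}. if j = i then \<one>\<^bsub>F j\<^esub> else \<zero>\<^bsub>F j\<^esub>)"
  have cr: "\<And>j. j < n \<Longrightarrow> cring (F j)" using fld by (simp add: field.axioms(1) domain.axioms(1))
  have "y \<in> prod_carrier F n" unfolding y_def prod_carrier_def
    using cr by (auto intro!: ring.ring_simprules cring.axioms(1))
  moreover have "y \<noteq> prod_zero F n"
  proof
    assume "y = prod_zero F n"
    then have "y i = prod_zero F n i" by simp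
    then show False using i fld[of i] unfolding y_def prod_zero_def
      by (simp add: field.axioms(1) domain.one_not_zero)
  qed
  moreover have "prod_mult F n z y = prod_zero F n"
    unfolding prod_mult_def prod_zero_def y_def
  proof (rule restrict_ext)
    fix j assume j: "j \<in> {..<n}"
    have zj: "z j \<in> carrier (F j)" using z j unfolding prod_carrier_def by auto
    show "z j \<otimes>\<^bsub>F j\<^esub> (\<lambda>j\<in>{..<n}. if j = i then \<one>\<^bsub>F j\<^esub> else \<zero>\<^bsub>F j\<^esub>) j = \<zero>\<^bsub>F j\<^esub>"
      using j i zj cr[of j] by (auto simp: cring.axioms(1) ring.ring_simprules)
  qed
  ultimately show "z \<in> prod_zero_divisors F n" using z unfolding prod_zero_divisors_def by blast
qed

lemma char2:
  assumes "ring (R::('a,'b) ring_scheme)" "ring_char R = 2"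
  shows "\<one>\<^bsub>R\<^esub> \<oplus>\<^bsub>R\<^esub> \<one>\<^bsub>R\<^esub> = \<zero>\<^bsub>R\<^esub>"
proof -
  have ex: "\<exists>n::nat. n > 0 \<and> add_pow R n \<one>\<^bsub>R\<^esub> = \<zero>\<^bsub>R\<^esub>"
    using assms(2) unfolding ring_char_def by (metis zero_neq_numeral)
  then have "(LEAST n::nat. n > 0 \<and> add_pow R n \<one>\<^bsub>R\<^esub> = \<zero>\<^bsub>R\<^esub>) = 2"
    using assms(2) unfolding ring_char_def by simp
  moreover have "(LEAST n::nat. n > 0 \<and> add_pow R n \<one>\<^bsub>R\<^esub> = \<zero>\<^bsub>R\<^esub>) > 0 \<and>
     add_pow R (LEAST n::nat. n > 0 \<and> add_pow R n \<one>\<^bsub>R\<^esub> = \<zero>\<^bsub>R\<^esub>) \<one>\<^bsub>R\<^esub> = \<zero>\<^bsub>R\<^esub>"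
    using ex by (rule LeastI_ex)
  ultimately have "add_pow R (2::nat) \<one>\<^bsub>R\<^esub> = \<zero>\<^bsub>R\<^esub>" by simp
  moreover have "add_pow R (2::nat) \<one>\<^bsub>R\<^esub> = \<one>\<^bsub>R\<^esub> \<oplus>\<^bsub>R\<^esub> \<one>\<^bsub>R\<^esub>"
  proof -
    interpret R: ring R by fact
    show ?thesis by (simp add: numeral_2_eq_2 add_pow_def)
  qed
  ultimately show ?thesis by simp
qed

lemma char2_eq:
  assumes "ring R" "\<one>\<^bsub>R\<^esub> \<oplus>\<^bsub>R\<^esub> \<one>\<^bsub>R\<^esub> = \<zero>\<^bsub>R\<^esub>"
    "a \<in> carrier R" "b \<in> carrier R" "a \<oplus>\<^bsub>R\<^esub> b = \<zero>\<^bsub>R\<^esub>"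
  shows "a = b"
proof -
  interpret R: ring R by fact
  have "a \<oplus>\<^bsub>R\<^esub> a = a \<otimes>\<^bsub>R\<^esub> (\<one>\<^bsub>R\<^esub> \<oplus>\<^bsub>R\<^esub> \<one>\<^bsub>R\<^esub>)" using assms(3) by (simp add: R.r_distr)
  also have "\<dots> = \<zero>\<^bsub>R\<^esub>" using assms(2,3) by (simp only: R.r_null)
  finally have "a \<oplus>\<^bsub>R\<^esub> a = \<zero>\<^bsub>R\<^esub>" .
  then have "a \<oplus>\<^bsub>R\<^esub> a = a \<oplus>\<^bsub>R\<^esub> b" using assms by simp
  then show ?thesis using assms by (metis R.add.l_cancel)
qed

lemma clique_le_coloring:
  assumes "is_clique V E K" "is_coloring V E k c" "finite K"
  shows "card K \<le> k"
proof -
  have "inj_on c K" using assms(1,2) unfolding is_clique_def is_coloring_def inj_on_def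
    by blast
  moreover have "c ` K \<subseteq> {..<k}" using assms(1,2) unfolding is_clique_def is_coloring_def by auto
  ultimately show ?thesis using card_inj_on_le[of c K "{..<k}"] by simp
qed

lemma good_map:
  assumes fi: "field R" and f0: "field R0"
    and fin: "finite (carrier R)" "finite (carrier R0)"
    and le: "card (carrier R0) \<le> card (carrier R)"
  shows "\<exists>g. (\<forall>a\<in>carrier R0 - {\<zero>\<^bsub>R0\<^esub>}. g a \<in> carrier R - {\<zero>\<^bsub>R\<^esub>}) \<and>
     (\<forall>a\<in>carrier R0 - {\<zero>\<^bsub>R0\<^esub>}. \<forall>b\<in>carrier R0 - {\<zero>\<^bsub>R0\<^esub>}. a \<noteq> b \<longrightarrow>
        (\<forall>u\<in>carrier R - {\<zero>\<^bsub>R\<^esub>}. g a \<otimes>\<^bsub>R\<^esub> u \<noteq> g b \<otimes>\<^bsub>R\<^esub> (\<ominus>\<^bsub>R\<^esub> u)))"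
proof -
  interpret R: field R by fact
  show ?thesis
  proof (cases "\<one>\<^bsub>R\<^esub> = \<ominus>\<^bsub>R\<^esub> \<one>\<^bsub>R\<^esub>")
    case False
    have "u \<noteq> \<ominus>\<^bsub>R\<^esub> u" if u: "u \<in> carrier R - {\<zero>\<^bsub>R\<^esub>}" for u
    proof
      assume h: "u = \<ominus>\<^bsub>R\<^esub> u"
      have "u \<otimes>\<^bsub>R\<^esub> \<one>\<^bsub>R\<^esub> = u \<otimes>\<^bsub>R\<^esub> (\<ominus>\<^bsub>R\<^esub> \<one>\<^bsub>R\<^esub>)"
        using u by (simp add: R.r_minus flip: h)
      then have "\<one>\<^bsub>R\<^esub> = \<ominus>\<^bsub>R\<^esub> \<one>\<^bsub>R\<^esub>" using u by (subst (asm) R.m_lcancel) auto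
      with False show False by simp
    qed
    then show ?thesis by (intro exI[of _ "\<lambda>_. \<one>\<^bsub>R\<^esub>"]) auto
  next
    case True
    have neg: "\<ominus>\<^bsub>R\<^esub> u = u" if u: "u \<in> carrier R" for u
    proof -
      have "\<ominus>\<^bsub>R\<^esub> u = (\<ominus>\<^bsub>R\<^esub> \<one>\<^bsub>R\<^esub>) \<otimes>\<^bsub>R\<^esub> u" using u by (simp add: R.l_minus)
      also have "\<dots> = u" using u by (simp flip: True)
      finally show ?thesis .
    qed
    interpret R0: field R0 by fact
    have "card (carrier R0 - {\<zero>\<^bsub>R0\<^esub>}) \<le> card (carrier R - {\<zero>\<^bsub>R\<^esub>})"
      using le fin by (simp add: card_Diff_singleton)
    then obtain f where f: "f ` (carrier R0 - {\<zero>\<^bsub>R0\<^esub>}) \<subseteq> carrier R - {\<zero>\<^bsub>R\<^esub>}"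
        "inj_on f (carrier R0 - {\<zero>\<^bsub>R0\<^esub>})"
      using card_le_inj[of "carrier R0 - {\<zero>\<^bsub>R0\<^esub>}" "carrier R - {\<zero>\<^bsub>R\<^esub>}"] fin by auto
    show ?thesis
    proof (intro exI[of _ f] conjI ballI impI)
      fix a assume "a \<in> carrier R0 - {\<zero>\<^bsub>R0\<^esub>}" then show "f a \<in> carrier R - {\<zero>\<^bsub>R\<^esub>}" using f by auto
    next
      fix a b u assume a: "a \<in> carrier R0 - {\<zero>\<^bsub>R0\<^esub>}" and b: "b \<in> carrier R0 - {\<zero>\<^bsub>R0\<^esub>}"
        and ab: "a \<noteq> b" and u: "u \<in> carrier R - {\<zero>\<^bsub>R\<^esub>}"
      have fa: "f a \<in> carrier R" and fb: "f b \<in> carrier R" using f a b by auto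
      show "f a \<otimes>\<^bsub>R\<^esub> u \<noteq> f b \<otimes>\<^bsub>R\<^esub> (\<ominus>\<^bsub>R\<^esub> u)"
      proof
        assume "f a \<otimes>\<^bsub>R\<^esub> u = f b \<otimes>\<^bsub>R\<^esub> (\<ominus>\<^bsub>R\<^esub> u)"
        then have "u \<otimes>\<^bsub>R\<^esub> f a = u \<otimes>\<^bsub>R\<^esub> f b" using u fa fb neg by (simp add: R.m_comm)
        then have "f a = f b" using u fa fb R.m_lcancel by simp
        then show False using f(2) a b ab by (auto simp: inj_on_def)
      qed
    qed
  qed
qed

theorem lemma19:
  fixes F :: "nat \<Rightarrow> ('a, 'b) ring_scheme" and n :: nat
  assumes "n \<ge> 2"
    and "\<And>i. i < n \<Longrightarrow> field (F i)"
    and "\<And>i. i < n \<Longrightarrow> finite (carrier (F i))"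
    and "\<And>i j. i \<le> j \<Longrightarrow> j < n \<Longrightarrow> card (carrier (F i)) \<le> card (carrier (F j))"
    and "ring_char (F 0) = 2"
  shows "chromatic_number (prod_regular F n) (total_adj F n)
           = clique_number (prod_regular F n) (total_adj F n)
       \<and> clique_number (prod_regular F n) (total_adj F n)
           = (\<Prod>i\<in>{1..<n}. card (carrier (F i)) - 1)"
proof -
  note n2 = assms(1) and fld = assms(2) and finF = assms(3) and le = assms(4)
  define P where "P = prod_carrier F n"
  define V where "V = prod_regular F n"
  define E where "E = total_adj F n"
  define m where "m = (\<Prod>i\<in>{1..<n}. card (carrier (F i)) - 1)"
  have rg: "ring (F i)" if "i < n" for i
    using fld[OF that] by (simp add: field.axioms(1) domain.axioms(1) cring.axioms(1))
  have finP: "finite P" unfolding P_def prod_carrier_def using finF by (auto intro: finite_PiE)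
  have V_char: "x \<in> V \<longleftrightarrow> x \<in> P \<and> (\<forall>i<n. x i \<noteq> \<zero>\<^bsub>F i\<^esub>)" for x
    unfolding V_def P_def prod_regular_def using zd_char[where F=F and n=n, OF fld] by blast
  have VP: "V \<subseteq> P" using V_char by blast
  have add_cl: "prod_add F n x y \<in> P" if "x \<in> P" "y \<in> P" for x y
    using that rg unfolding P_def prod_carrier_def prod_add_def
    by (auto intro!: ring.ring_simprules(1))
  have adj: "E x y \<longleftrightarrow> x \<noteq> y \<and> (\<exists>i<n. x i \<oplus>\<^bsub>F i\<^esub> y i = \<zero>\<^bsub>F i\<^esub>)"
    if "x \<in> P" "y \<in> P" for x y
    unfolding E_def total_adj_def using zd_char[where F=F and n=n, OF fld add_cl[OF that, unfolded P_def]]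
    by (auto simp: prod_add_def)
  have c2: "\<one>\<^bsub>F 0\<^esub> \<oplus>\<^bsub>F 0\<^esub> \<one>\<^bsub>F 0\<^esub> = \<zero>\<^bsub>F 0\<^esub>"
    using char2[OF rg assms(5)] n2 by simp
  have n0: "0 < n" using n2 by simp
  have rg0: "ring (F 0)" using rg n0 by simp
  have fld0: "field (F 0)" using fld n0 by simp
  define K0 where "K0 = (\<Pi>\<^sub>E i\<in>{..<n}. if i = 0 then {\<one>\<^bsub>F 0\<^esub>} else carrier (F i) - {\<zero>\<^bsub>F i\<^esub>})"
  have K0V: "K0 \<subseteq> V"
  proof
    fix x assume x: "x \<in> K0"
    have "x \<in> P" unfolding P_def prod_carrier_def
    proof (rule PiE_I)
      fix i assume i: "i \<in> {..<n}"
      show "x i \<in> carrier (F i)"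
      proof (cases "i = 0")
        case True
        then have "x i = \<one>\<^bsub>F 0\<^esub>" using x i unfolding K0_def by (auto simp: PiE_def Pi_def)
        then show ?thesis using True rg0 by (simp add: ring.ring_simprules(6))
      next
        case False then show ?thesis using x i unfolding K0_def by (auto simp: PiE_def Pi_def)
      qed
    next
      fix i assume "i \<notin> {..<n}" then show "x i = undefined" using x unfolding K0_def by (auto simp: PiE_def extensional_def)
    qed
    moreover have "\<forall>i<n. x i \<noteq> \<zero>\<^bsub>F i\<^esub>"
    proof (intro allI impI)
      fix i assume i: "i < n"
      show "x i \<noteq> \<zero>\<^bsub>F i\<^esub>"
      proof (cases "i = 0")
        case True
        then have "x i = \<one>\<^bsub>F 0\<^esub>" using x i unfolding K0_def by (auto simp: PiE_def Pi_def)
        moreover have "\<one>\<^bsub>F 0\<^esub> \<noteq> \<zero>\<^bsub>F 0\<^esub>" using fld0 by (simp add: field.axioms(1) domain.one_not_zero)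
        ultimately show ?thesis using True by simp
      next
        case False then show ?thesis using x i unfolding K0_def by (auto simp: PiE_def Pi_def)
      qed
    qed
    ultimately show "x \<in> V" using V_char by blast
  qed
  have K0cl: "is_clique V E K0"
    unfolding is_clique_def
  proof (intro conjI ballI impI K0V)
    fix x y assume x: "x \<in> K0" and y: "y \<in> K0" and xy: "x \<noteq> y"
    have "x 0 = \<one>\<^bsub>F 0\<^esub>" "y 0 = \<one>\<^bsub>F 0\<^esub>" using x y n0 unfolding K0_def by (auto simp: PiE_def Pi_def)
    moreover have "x \<in> P" "y \<in> P" using K0V VP x y by auto
    ultimately show "E x y" using adj[of x y] xy c2 n0 by auto
  qed
  have cardK0: "card K0 = m"
  proof -
    have "card K0 = (\<Prod>i\<in>{..<n}. card (if i = 0 then {\<one>\<^bsub>F 0\<^esub>} else carrier (F i) - {\<zero>\<^bsub>F i\<^esub>}))"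
      unfolding K0_def by (simp add: card_PiE)
    also have "{..<n} = insert 0 {1..<n}" using n0 by auto
    also have "(\<Prod>i\<in>insert 0 {1..<n}. card (if i = 0 then {\<one>\<^bsub>F 0\<^esub>} else carrier (F i) - {\<zero>\<^bsub>F i\<^esub>}))
       = (\<Prod>i\<in>{1..<n}. card (carrier (F i) - {\<zero>\<^bsub>F i\<^esub>}))" by simp
    also have "\<dots> = m" unfolding m_def
      using rg finF by (intro prod.cong) (auto simp: card_Diff_singleton ring.ring_simprules)
    finally show ?thesis .
  qed
  have "\<forall>i\<in>{1..<n}. \<exists>g. (\<forall>a\<in>carrier (F 0) - {\<zero>\<^bsub>F 0\<^esub>}. g a \<in> carrier (F i) - {\<zero>\<^bsub>F i\<^esub>}) \<and>
     (\<forall>a\<in>carrier (F 0) - {\<zero>\<^bsub>F 0\<^esub>}. \<forall>b\<in>carrier (F 0) - {\<zero>\<^bsub>F 0\<^esub>}. a \<noteq> b \<longrightarrow>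
        (\<forall>u\<in>carrier (F i) - {\<zero>\<^bsub>F i\<^esub>}. g a \<otimes>\<^bsub>F i\<^esub> u \<noteq> g b \<otimes>\<^bsub>F i\<^esub> (\<ominus>\<^bsub>F i\<^esub> u)))"
  (is "\<forall>i\<in>_. \<exists>g. ?P i g")
  proof
    fix i assume i: "i \<in> {1..<n}"
    show "\<exists>g. ?P i g" (is "\<exists>g. ?Q g")
      by (rule good_map[of "F i" "F 0"]) (use i fld finF le n0 in auto)
  qed
  then obtain G where G0: "\<forall>i\<in>{1..<n}. ?P i (G i)" by (rule bchoice[THEN exE]) blast
  have G1: "G i a \<in> carrier (F i) - {\<zero>\<^bsub>F i\<^esub>}" if "i \<in> {1..<n}" "a \<in> carrier (F 0) - {\<zero>\<^bsub>F 0\<^esub>}" for i a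
    using G0 that by blast
  have G2: "G i a \<otimes>\<^bsub>F i\<^esub> u \<noteq> G i b \<otimes>\<^bsub>F i\<^esub> (\<ominus>\<^bsub>F i\<^esub> u)"
    if "i \<in> {1..<n}" "a \<in> carrier (F 0) - {\<zero>\<^bsub>F 0\<^esub>}" "b \<in> carrier (F 0) - {\<zero>\<^bsub>F 0\<^esub>}"
       "a \<noteq> b" "u \<in> carrier (F i) - {\<zero>\<^bsub>F i\<^esub>}" for i a b u
    using G0 that by blast
  define T where "T = (\<Pi>\<^sub>E i\<in>{1..<n}. carrier (F i) - {\<zero>\<^bsub>F i\<^esub>})"
  have cardT: "card T = m" unfolding T_def m_def
    using rg finF by (simp add: card_PiE) (intro prod.cong, auto simp: card_Diff_singleton ring.ring_simprules)
  have finT: "finite T" unfolding T_def using finF by (auto intro: finite_PiE)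
  obtain h where h: "bij_betw h T {0..<card T}" using ex_bij_betw_finite_nat[OF finT] by blast
  define tup where "tup x = (\<lambda>i\<in>{1..<n}. G i (x 0) \<otimes>\<^bsub>F i\<^esub> x i)" for x
  define col where "col x = h (tup x)" for x
  have tupT: "tup x \<in> T" if x: "x \<in> V" for x
  proof -
    have x0: "x 0 \<in> carrier (F 0) - {\<zero>\<^bsub>F 0\<^esub>}" using x V_char n0 unfolding P_def prod_carrier_def by auto
    have xi: "x i \<in> carrier (F i) - {\<zero>\<^bsub>F i\<^esub>}" if "i < n" for i
      using x V_char that unfolding P_def prod_carrier_def by auto
    show ?thesis unfolding T_def tup_def
    proof (subst restrict_PiE_iff, intro ballI)
      fix i assume i: "i \<in> {1..<n}"
      have d: "domain (F i)" using fld i by (simp add: field.axioms(1))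
      show "G i (x 0) \<otimes>\<^bsub>F i\<^esub> x i \<in> carrier (F i) - {\<zero>\<^bsub>F i\<^esub>}"
        using G1[OF i x0] xi[of i] i d by (auto simp: domain.integral_iff ring.ring_simprules domain_def cring.axioms(1))
    qed
  qed
  have colC: "is_coloring V E m col"
    unfolding is_coloring_def
  proof (intro conjI ballI impI)
    fix x assume "x \<in> V"
    then show "col x < m" using tupT h cardT unfolding col_def bij_betw_def by auto
  next
    fix x y assume x: "x \<in> V" and y: "y \<in> V" and xy: "x \<noteq> y \<and> E x y"
    show "col x \<noteq> col y"
    proof
      assume "col x = col y"
      then have tt: "tup x = tup y" using h tupT[OF x] tupT[OF y] unfolding col_def bij_betw_def inj_on_def by blast
      have comp: "G i (x 0) \<otimes>\<^bsub>F i\<^esub> x i = G i (y 0) \<otimes>\<^bsub>F i\<^esub> y i" if "i \<in> {1..<n}" for i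
        using fun_cong[OF tt, of i] that unfolding tup_def by simp
      have x0: "x 0 \<in> carrier (F 0) - {\<zero>\<^bsub>F 0\<^esub>}" using x V_char n0 unfolding P_def prod_carrier_def by auto
      have y0: "y 0 \<in> carrier (F 0) - {\<zero>\<^bsub>F 0\<^esub>}" using y V_char n0 unfolding P_def prod_carrier_def by auto
      have xi: "x i \<in> carrier (F i) - {\<zero>\<^bsub>F i\<^esub>}" if "i < n" for i
        using x V_char that unfolding P_def prod_carrier_def by auto
      have yi: "y i \<in> carrier (F i) - {\<zero>\<^bsub>F i\<^esub>}" if "i < n" for i
        using y V_char that unfolding P_def prod_carrier_def by auto
      obtain j where j: "j < n" "x j \<oplus>\<^bsub>F j\<^esub> y j = \<zero>\<^bsub>F j\<^esub>"
        using adj[of x y] xy x y VP by auto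
      show False
      proof (cases "x 0 = y 0")
        case True
        have "x i = y i" if "i < n" for i
        proof (cases "i = 0")
          case True with \<open>x 0 = y 0\<close> show ?thesis by simp
        next
          case False
          then have i: "i \<in> {1..<n}" using that by auto
          have d: "domain (F i)" using fld i by (simp add: field.axioms(1))
          have e: "G i (x 0) \<otimes>\<^bsub>F i\<^esub> x i = G i (x 0) \<otimes>\<^bsub>F i\<^esub> y i"
            using comp[OF i] \<open>x 0 = y 0\<close> by simp
          have "i < n" using i by simp
          then show ?thesis using domain.m_lcancel[OF d, of "G i (x 0)" "x i" "y i"] e G1[OF i x0] xi[of i] yi[of i]
            by blast
        qed
        moreover have "x \<in> extensional {..<n}" "y \<in> extensional {..<n}"
          using x y VP unfolding P_def prod_carrier_def by (auto simp: PiE_def)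
        ultimately have "x = y" by (auto intro: extensionalityI)
        with xy show False by simp
      next
        case False
        show False
        proof (cases "j = 0")
          case True
          then have "x 0 = y 0" using char2_eq[OF rg0 c2, of "x 0" "y 0"] j x0 y0 by auto
          with False show False by simp
        next
          case jn0: False
          then have jj: "j \<in> {1..<n}" using j by auto
          have rj: "ring (F j)" using rg j by simp
          have "y j = \<ominus>\<^bsub>F j\<^esub> x j"
          proof -
            interpret Rj: ring "F j" by (rule rj)
            have xc: "x j \<in> carrier (F j)" and yc: "y j \<in> carrier (F j)" using xi[of j] yi[of j] j by auto
            have "y j \<oplus>\<^bsub>F j\<^esub> x j = \<zero>\<^bsub>F j\<^esub>" using j(2) xc yc by (simp add: Rj.a_comm)
            then show ?thesis using Rj.minus_equality xc yc by metis
          qed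
          then show False using comp[OF jj] G2[OF jj x0 y0 False xi[of j]] j by simp
        qed
      qed
    qed
  qed
  define \<chi> where "\<chi> = chromatic_number V E"
  have ex: "\<exists>c. is_coloring V E m c" using colC by blast
  have chi_le: "\<chi> \<le> m" unfolding \<chi>_def chromatic_number_def using ex by (rule Least_le)
  have "\<exists>c. is_coloring V E \<chi> c" unfolding \<chi>_def chromatic_number_def using ex by (rule LeastI)
  then obtain c where c: "is_coloring V E \<chi> c" by blast
  have finK: "finite K" if "is_clique V E K" for K
    using that VP finP unfolding is_clique_def by (meson finite_subset)
  have "m \<le> \<chi>" using clique_le_coloring[OF K0cl c finK[OF K0cl]] cardK0 by simp
  with chi_le have chi: "\<chi> = m" by simp
  have om: "clique_number V E = m"
    unfolding clique_number_def
  proof (rule Max_eqI)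
    have "{card K |K. is_clique V E K} \<subseteq> {..m}"
      using clique_le_coloring[OF _ c finK] chi by auto
    then show "finite {card K |K. is_clique V E K}" using finite_subset by blast
  next
    fix y assume "y \<in> {card K |K. is_clique V E K}"
    then show "y \<le> m" using clique_le_coloring[OF _ c finK] chi by auto
  next
    show "m \<in> {card K |K. is_clique V E K}" using K0cl cardK0 by force
  qed
  show ?thesis using om chi unfolding \<chi>_def V_def E_def m_def by simp
qed

end
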